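(* Let $\Sigma=\{(x,y)\in\mathbb{R}^2_+ : x+y=1\}$. Let $S\subset\mathbb{R}^2_+\setminus\{(0,0)\}$ be a connected set such that, for some $R>0$, $S\cap\{(0,y) : y\in(0,R)\}\neq\emptyset$ and $S\cap\{(x,0) : x\in(0,R)\}\neq\emptyset$. Let $\pi:S\to\Sigma$ be the projection along positive rays, $\pi(x,y)=\big(\tfrac{x}{x+y},\tfrac{y}{x+y}\big)$, and let $G:S\to\Sigma$ be continuous. Then the multivalued map $H=\pi^{-1}\circ G:S\multimap S$ (where $\pi^{-1}(z)=\{s\in S:\pi(s)=z\}$) has at least one fixed point, i.e. there exists $s\in S$ with $s\in\pi^{-1}(G(s))$, equivalently $\pi(s)=G(s)$.
   Context: $\mathbb{R}^2_+$ denotes the closed positive quadrant $\{(x,y):x\ge0,\,y\ge0\}$. *)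

theory Defs
  imports "HOL-Analysis.Analysis"
begin

definition quadrant :: "(real \<times> real) set" where
  "quadrant = {(x, y). x \<ge> 0 \<and> y \<ge> 0}"

definition simplex2 :: "(real \<times> real) set" where
  "simplex2 = {(x, y). x \<ge> 0 \<and> y \<ge> 0 \<and> x + y = 1}"

definition ray_proj :: "real \<times> real \<Rightarrow> real \<times> real" where
  "ray_proj p = (fst p / (fst p + snd p), snd p / (fst p + snd p))"

definition ray_preimage :: "(real \<times> real) set \<Rightarrow> real \<times> real \<Rightarrow> (real \<times> real) set" where
  "ray_preimage S z = {s \<in> S. ray_proj s = z}"

end

theory Submission
  imports Defs
begin

theorem lemma2p1:
  fixes S :: "(real \<times> real) set" and G :: "real \<times> real \<Rightarrow> real \<times> real" and R :: real
  assumes "S \<subseteq> quadrant - {(0, 0)}"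
    and "connected S"
    and "R > 0"
    and "S \<inter> {(0, y) | y. y \<in> {0<..<R}} \<noteq> {}"
    and "S \<inter> {(x, 0) | x. x \<in> {0<..<R}} \<noteq> {}"
    and "continuous_on S G"
    and "G ` S \<subseteq> simplex2"
  shows "\<exists>s\<in>S. s \<in> ray_preimage S (G s)"
proof -
  have pos: "fst s + snd s > 0" if "s \<in> S" for s
  proof -
    obtain a b where s: "s = (a,b)" by fastforce
    have "a \<ge> 0" "b \<ge> 0" "(a,b) \<noteq> (0,0)" using assms(1) that s by (auto simp: quadrant_def)
    then show ?thesis using s by auto
  qed
  define f where "f s = fst s / (fst s + snd s) - fst (G s)" for s
  have cf: "continuous_on S f" unfolding f_def
    by (intro continuous_intros continuous_on_fst[OF assms(6)]) (use pos in force)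
  have conn: "connected (f ` S)" using connected_continuous_image[OF cf assms(2)] .
  obtain y where y: "(0,y) \<in> S" using assms(4) by auto
  obtain x where x: "(x,0) \<in> S" using assms(5) by auto
  have G1: "G (0,y) \<in> simplex2" "G (x,0) \<in> simplex2" using assms(7) x y by auto
  have "f (0,y) \<le> 0" using G1 by (auto simp: f_def simplex2_def split: prod.splits)
  moreover have "f (x,0) \<ge> 0" using G1 pos[OF x] by (auto simp: f_def simplex2_def split: prod.splits)
  ultimately have "0 \<in> f ` S"
    using connected_contains_Icc[OF conn, of "f (0,y)" "f (x,0)"] x y by auto
  then obtain s where s: "s \<in> S" "f s = 0" by auto
  have Gs: "G s \<in> simplex2" using assms(7) s by auto
  obtain a b where ab: "s = (a,b)" by fastforce
  obtain c d where cd: "G s = (c,d)" by fastforce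
  have p: "a + b > 0" using pos[OF s(1)] ab by simp
  have "a/(a+b) = c" using s(2) ab cd by (simp add: f_def)
  moreover have "c + d = 1" using Gs cd by (simp add: simplex2_def)
  moreover have "b/(a+b) = 1 - a/(a+b)" using p by (simp add: field_simps)
  ultimately have "ray_proj s = G s" using ab cd by (simp add: ray_proj_def)
  then show ?thesis using s(1) by (auto simp: ray_preimage_def)
qed

end
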